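(* Let $(A,G)$ be an admissible pair with $A\in M_{Q_0}(\mathbb Z)$ and let $\{i_1,\ldots,i_n\}$ be a $G$-orbit in $Q_0$. Then for every permutation $\sigma\in\mathfrak S_n$, $$\mu_{i_n}\circ\cdots\circ\mu_{i_1}(A)=\mu_{i_{\sigma(n)}}\circ\cdots\circ\mu_{i_{\sigma(1)}}(A).$$
   Context: $Q_0$ finite; $A=(a_{ij})$ skew-symmetrizable ($DA$ skew-symmetric for a positive integer diagonal $D$). Mutation $\mu_k(B)=(b'_{ij})$: $b'_{ij}=-b_{ij}$ if $k\in\{i,j\}$, else $b_{ij}+\tfrac12(|b_{ik}|b_{kj}+b_{ik}|b_{kj}|)$. An automorphism of $A$ is a permutation $g$ of $Q_0$ with $a_{gi,gj}=a_{ij}$; a group $G$ of such permutations is admissible (and $(A,G)$ an admissible pair) if for distinct $i,j$ in the same $G$-orbit there is no path of length $1$ or $2$ from $i$ to $j$ in the valued quiver of $A$ (i.e. $a_{ij}\le0$ and no $k$ with $a_{ik}>0$, $a_{kj}>0$). *)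

theory Defs
  imports "HOL-Combinatorics.Permutations"
begin

text \<open>Matrices indexed by the finite vertex set Q0 (a finite type 'q), integer entries.\<close>
type_synonym 'q mat = "'q \<Rightarrow> 'q \<Rightarrow> int"

definition skew_symmetrizable :: "'q::finite mat \<Rightarrow> bool" where
  "skew_symmetrizable A \<longleftrightarrow>
     (\<exists>D::'q \<Rightarrow> int. (\<forall>i. D i > 0) \<and> (\<forall>i j. D i * A i j = - (D j * A j i)))"

text \<open>Matrix mutation at k. The quantity |b_ik| b_kj + b_ik |b_kj| is always even,
  so integer division by 2 is exact.\<close>
definition mutate :: "'q \<Rightarrow> 'q mat \<Rightarrow> 'q mat" where
  "mutate k B = (\<lambda>i j. if k = i \<or> k = j then - B i j
                        else B i j + (\<bar>B i k\<bar> * B k j + B i k * \<bar>B k j\<bar>) div 2)"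

definition mutseq :: "'q list \<Rightarrow> 'q mat \<Rightarrow> 'q mat" where
  "mutseq ks A = foldl (\<lambda>B k. mutate k B) A ks"

definition is_automorphism :: "'q mat \<Rightarrow> ('q \<Rightarrow> 'q) \<Rightarrow> bool" where
  "is_automorphism A g \<longleftrightarrow> bij g \<and> (\<forall>i j. A (g i) (g j) = A i j)"

definition automorphism_group :: "'q mat \<Rightarrow> ('q \<Rightarrow> 'q) set \<Rightarrow> bool" where
  "automorphism_group A G \<longleftrightarrow>
     (\<forall>g\<in>G. is_automorphism A g) \<and> id \<in> G \<and>
     (\<forall>g\<in>G. \<forall>h\<in>G. g \<circ> h \<in> G) \<and> (\<forall>g\<in>G. inv g \<in> G)"

definition orbit :: "('q \<Rightarrow> 'q) set \<Rightarrow> 'q \<Rightarrow> 'q set" where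
  "orbit G i = {g i | g. g \<in> G}"

definition admissible :: "'q mat \<Rightarrow> ('q \<Rightarrow> 'q) set \<Rightarrow> bool" where
  "admissible A G \<longleftrightarrow> automorphism_group A G \<and>
     (\<forall>i j. i \<noteq> j \<and> j \<in> orbit G i \<longrightarrow>
        A i j \<le> 0 \<and> \<not> (\<exists>k. A i k > 0 \<and> A k j > 0))"

definition admissible_pair :: "'q::finite mat \<Rightarrow> ('q \<Rightarrow> 'q) set \<Rightarrow> bool" where
  "admissible_pair A G \<longleftrightarrow> skew_symmetrizable A \<and> admissible A G"

end

theory Submission
  imports Defs
begin

definition zinv :: "'q set \<Rightarrow> 'q mat \<Rightarrow> bool" where
  "zinv S B \<longleftrightarrow> (\<forall>k\<in>S. \<forall>l\<in>S. k \<noteq> l \<longrightarrow> B k l = 0)"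

lemma zinv_mut: "zinv S B \<Longrightarrow> m \<in> S \<Longrightarrow> zinv S (mutate m B)"
  unfolding zinv_def mutate_def by auto

lemma mut_row: "k \<noteq> l \<Longrightarrow> B k l = 0 \<Longrightarrow> B l k = 0 \<Longrightarrow> mutate l B k x = B k x"
  unfolding mutate_def by auto

lemma mut_col: "k \<noteq> l \<Longrightarrow> B k l = 0 \<Longrightarrow> B l k = 0 \<Longrightarrow> mutate l B x k = B x k"
  unfolding mutate_def by auto

lemma mut_comm: "zinv S B \<Longrightarrow> k \<in> S \<Longrightarrow> l \<in> S \<Longrightarrow>
   mutate k (mutate l B) = mutate l (mutate k B)"
proof (cases "k = l")
  case False
  assume z: "zinv S B" "k \<in> S" "l \<in> S"
  then have kl: "B k l = 0" "B l k = 0" using False unfolding zinv_def by auto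
  show ?thesis
  proof (rule ext, rule ext)
    fix x y
    have r1: "\<And>y. mutate l B k y = B k y" "\<And>y. mutate l B y k = B y k"
      using mut_row[of k l B] mut_col[of k l B] kl False by auto
    have r2: "\<And>y. mutate k B l y = B l y" "\<And>y. mutate k B y l = B y l"
      using mut_row[of l k B] mut_col[of l k B] kl False by auto
    show "mutate k (mutate l B) x y = mutate l (mutate k B) x y"
      unfolding mutate_def[of k "mutate l B"] mutate_def[of l "mutate k B"] r1 r2
      unfolding mutate_def using kl False by auto
  qed
qed simp

lemma mutseq_Cons: "mutseq (a # l) B = mutseq l (mutate a B)"
  by (simp add: mutseq_def)

lemma mutseq_append: "mutseq (l1 @ l2) B = mutseq l2 (mutseq l1 B)"
  by (simp add: mutseq_def)

lemma mutseq_zinv: "zinv S B \<Longrightarrow> set l \<subseteq> S \<Longrightarrow> zinv S (mutseq l B)"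
  by (induction l arbitrary: B) (auto simp: mutseq_Cons mutseq_def[of "[]"] zinv_mut)

lemma mutseq_comm: "zinv S B \<Longrightarrow> set l \<subseteq> S \<Longrightarrow> x \<in> S \<Longrightarrow>
   mutseq l (mutate x B) = mutate x (mutseq l B)"
proof (induction l arbitrary: B)
  case Nil then show ?case by (simp add: mutseq_def)
next
  case (Cons a l)
  have "mutseq (a # l) (mutate x B) = mutseq l (mutate a (mutate x B))" by (simp add: mutseq_Cons)
  also have "\<dots> = mutseq l (mutate x (mutate a B))" using mut_comm[of S B a x] Cons.prems by simp
  also have "\<dots> = mutate x (mutseq l (mutate a B))"
  proof -
    have "zinv S (mutate a B)" using zinv_mut Cons.prems by auto
    then show ?thesis using Cons.IH[of "mutate a B"] Cons.prems by auto
  qed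
  finally show ?case by (simp add: mutseq_Cons)
qed

lemma mutseq_perm: "zinv S B \<Longrightarrow> set xs \<subseteq> S \<Longrightarrow> mset xs = mset ys \<Longrightarrow>
   mutseq xs B = mutseq ys B"
proof (induction xs arbitrary: B ys)
  case Nil then show ?case by simp
next
  case (Cons x xs)
  have "x \<in> set ys" using Cons.prems(3) by (metis list.set_intros(1) set_mset_mset)
  then obtain ys1 ys2 where ys: "ys = ys1 @ x # ys2" by (meson split_list)
  have ysS: "set ys \<subseteq> S" using Cons.prems(2,3) by (metis set_mset_mset)
  have m: "mset xs = mset (ys1 @ ys2)" using Cons.prems(3) ys by simp
  have "mutseq ys B = mutseq ys2 (mutate x (mutseq ys1 B))"
    by (simp add: ys mutseq_append mutseq_Cons)
  also have "\<dots> = mutseq ys2 (mutseq ys1 (mutate x B))"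
    using mutseq_comm[of S B ys1 x] Cons.prems ys ysS by auto
  also have "\<dots> = mutseq (ys1 @ ys2) (mutate x B)" by (simp add: mutseq_append)
  also have "\<dots> = mutseq xs (mutate x B)"
  proof -
    have "zinv S (mutate x B)" using zinv_mut Cons.prems by auto
    then show ?thesis using Cons.IH[of "mutate x B" "ys1 @ ys2"] Cons.prems m by auto
  qed
  finally show ?case by (simp add: mutseq_Cons)
qed

lemma orbit_zero:
  assumes "admissible_pair A G" "k \<in> orbit G i" "l \<in> orbit G i" "k \<noteq> l"
  shows "A k l = 0"
proof -
  have ag: "automorphism_group A G" and adm: "admissible A G"
    using assms(1) by (auto simp: admissible_pair_def admissible_def)
  obtain g h where g: "g \<in> G" "k = g i" and h: "h \<in> G" "l = h i"
    using assms(2,3) by (auto simp: orbit_def)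
  have bg: "bij g" "bij h" using ag g h by (auto simp: automorphism_group_def is_automorphism_def)
  have gi: "inv g \<in> G" "inv h \<in> G" using ag g h by (auto simp: automorphism_group_def)
  have m1: "(h \<circ> inv g) \<in> G" "(g \<circ> inv h) \<in> G" using ag g h gi by (auto simp: automorphism_group_def)
  have m2: "(h \<circ> inv g) k = l" "(g \<circ> inv h) l = k"
    using g h bg by (simp_all add: bij_is_inj inv_f_f)
  have "l \<in> orbit G k" unfolding orbit_def using m1(1) m2(1) by blast
  moreover have "k \<in> orbit G l" unfolding orbit_def using m1(2) m2(2) by blast
  ultimately have le: "A k l \<le> 0" "A l k \<le> 0" using adm assms(4) unfolding admissible_def by auto
  obtain D :: "_ \<Rightarrow> int" where D: "\<forall>i. D i > 0" "\<forall>i j. D i * A i j = - (D j * A j i)"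
    using assms(1) by (auto simp: admissible_pair_def skew_symmetrizable_def)
  have e: "D k * A k l = - (D l * A l k)" using D(2) by blast
  have "D k * A k l \<le> 0" using le D(1) by (meson less_imp_le mult_nonneg_nonpos)
  moreover have "D l * A l k \<le> 0" using le D(1) by (meson less_imp_le mult_nonneg_nonpos)
  ultimately have "D k * A k l = 0" using e by linarith
  then show ?thesis using D(1) by (metis less_irrefl mult_eq_0_iff)
qed

theorem mainTheorem9:
  fixes A :: "'q::finite mat" and G :: "('q \<Rightarrow> 'q) set" and i :: 'q and "is" :: "'q list"
    and \<sigma> :: "nat \<Rightarrow> nat"
  assumes "admissible_pair A G"
    and "distinct is" and "set is = orbit G i"
    and "\<sigma> permutes {..<length is}"
  shows "mutseq is A = mutseq (map (\<lambda>t. is ! \<sigma> t) [0..<length is]) A"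
proof -
  have z: "zinv (orbit G i) A" using orbit_zero[OF assms(1)] unfolding zinv_def by blast
  have "map (\<lambda>t. is ! \<sigma> t) [0..<length is] = permute_list \<sigma> is"
    by (simp add: permute_list_def)
  then have "mset is = mset (map (\<lambda>t. is ! \<sigma> t) [0..<length is])"
    using mset_permute_list[OF assms(4)] by simp
  then show ?thesis using mutseq_perm[OF z] assms(3) by simp
qed

end
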